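(* Let $t\ge2$ and let $p$ be a distribution on $\mathbb{R}^d$ with finite moments of order $2t$ and mean $\mu$, with $M_j=\mathbb{E}_{x\sim p}[(x-\mu)^{\otimes j}]$ ($M_0=1$). For every collection of non-negative integers $i_0,\dots,i_r$ with $i_0+\cdots+i_r=2t$ and $i_s\le 2t-2$ for all $s$, $$\langle M_{i_0}\otimes\cdots\otimes M_{i_r},v^{\otimes 2t}\rangle\preceq_{2t}\langle M_2\otimes M_{2t-2},v^{\otimes 2t}\rangle.$$
   Context: For polynomials $a(v),b(v)$ in $v\in\mathbb{R}^d$, $a(v)\preceq_{2t} b(v)$ means there is a polynomial $r(v)$ of degree at most $2t-2$ such that $b(v)-a(v)-r(v)(\|v\|_2^2-1)$ is a sum of squares of polynomials of degree at most $t$. For an order-$m$ tensor $T$, $\langle T,v^{\otimes m}\rangle$ is the associated degree-$m$ polynomial in $v$; note $\langle M_a\otimes M_b, v^{\otimes(a+b)}\rangle=\langle M_a,v^{\otimes a}\rangle\langle M_b,v^{\otimes b}\rangle$. *)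

theory Defs
  imports "HOL-Probability.Probability"
begin

definition poly_deg_le :: "nat \<Rightarrow> (real^'d \<Rightarrow> real) \<Rightarrow> bool" where
  "poly_deg_le k f \<longleftrightarrow>
     (\<exists>(S :: ('d \<Rightarrow> nat) set) c. finite S \<and> (\<forall>\<alpha>\<in>S. (\<Sum>i\<in>UNIV. \<alpha> i) \<le> k) \<and>
        (\<forall>v. f v = (\<Sum>\<alpha>\<in>S. c \<alpha> * (\<Prod>i\<in>UNIV. (v $ i) ^ (\<alpha> i)))))"

text \<open>sos_le_2t t a b  is  a \<preceq>_{2t} b: there is a polynomial r of degree at most 2t-2
  such that b - a - r (|v|^2 - 1) is a sum of squares of polynomials of degree at most t.\<close>
definition sos_le_2t :: "nat \<Rightarrow> (real^'d \<Rightarrow> real) \<Rightarrow> (real^'d \<Rightarrow> real) \<Rightarrow> bool" where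
  "sos_le_2t t a b \<longleftrightarrow>
     (\<exists>r. poly_deg_le (2*t - 2) r \<and>
        (\<exists>qs. (\<forall>q\<in>set qs. poly_deg_le t q) \<and>
           (\<forall>v. b v - a v - r v * ((norm v)^2 - 1) = (\<Sum>q\<leftarrow>qs. (q v)^2))))"

text \<open>Order-m tensors over R^d are functions from index lists of length m to reals.\<close>
definition tensor_poly :: "nat \<Rightarrow> ('d::finite list \<Rightarrow> real) \<Rightarrow> real^'d \<Rightarrow> real" where
  "tensor_poly m T v = (\<Sum>is\<in>{is. set is \<subseteq> UNIV \<and> length is = m}.
                          T is * (\<Prod>k<m. v $ (is ! k)))"

fun tensor_prod_list :: "(nat \<times> ('d list \<Rightarrow> real)) list \<Rightarrow> ('d list \<Rightarrow> real)" where
  "tensor_prod_list [] = (\<lambda>_. 1)"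
| "tensor_prod_list ((m, T) # rest) = (\<lambda>is. T (take m is) * tensor_prod_list rest (drop m is))"

definition mean_vec :: "(real^'d) measure \<Rightarrow> real^'d" where
  "mean_vec p = integral\<^sup>L p (\<lambda>x. x)"

definition moment_tensor :: "(real^'d) measure \<Rightarrow> nat \<Rightarrow> ('d list \<Rightarrow> real)" where
  "moment_tensor p j = (\<lambda>is. integral\<^sup>L p (\<lambda>x. \<Prod>k<j. (x - mean_vec p) $ (is ! k)))"

end

theory Submission
  imports Defs
begin

lemma pdl_intro:
  fixes f :: "real^'d \<Rightarrow> real" and \<alpha> :: "'j \<Rightarrow> 'd \<Rightarrow> nat"
  assumes "finite J" "\<forall>j\<in>J. (\<Sum>i\<in>UNIV. \<alpha> j i) \<le> k"
    "\<forall>v. f v = (\<Sum>j\<in>J. e j * (\<Prod>i\<in>UNIV. (v $ i) ^ (\<alpha> j i)))"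
  shows "poly_deg_le k f"
  unfolding poly_deg_le_def
proof (intro exI conjI allI)
  show "finite (\<alpha> ` J)" using assms by auto
  show "\<forall>\<beta>\<in>\<alpha> ` J. (\<Sum>i\<in>UNIV. \<beta> i) \<le> k" using assms by auto
  fix v
  have "(\<Sum>\<beta>\<in>\<alpha> ` J. (\<Sum>j\<in>{j\<in>J. \<alpha> j = \<beta>}. e j) * (\<Prod>i\<in>UNIV. (v $ i) ^ (\<beta> i)))
      = (\<Sum>\<beta>\<in>\<alpha> ` J. (\<Sum>j\<in>{j\<in>J. \<alpha> j = \<beta>}. e j * (\<Prod>i\<in>UNIV. (v $ i) ^ (\<alpha> j i))))"
    by (auto simp: sum_distrib_right intro!: sum.cong)
  also have "\<dots> = (\<Sum>j\<in>J. e j * (\<Prod>i\<in>UNIV. (v $ i) ^ (\<alpha> j i)))"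
    using assms(1) by (intro sum.group) auto
  finally show "f v = (\<Sum>\<beta>\<in>\<alpha> ` J. (\<Sum>j\<in>{j\<in>J. \<alpha> j = \<beta>}. e j) * (\<Prod>i\<in>UNIV. (v $ i) ^ (\<beta> i)))"
    using assms(3) by simp
qed

lemma pdl_add:
  assumes "poly_deg_le k f" "poly_deg_le k g"
  shows "poly_deg_le k (\<lambda>v. f v + g v)"
proof -
  obtain S c where S: "finite S" "\<forall>\<alpha>\<in>S. (\<Sum>i\<in>UNIV. \<alpha> i) \<le> k"
     "\<forall>v. f v = (\<Sum>\<alpha>\<in>S. c \<alpha> * (\<Prod>i\<in>UNIV. (v $ i) ^ (\<alpha> i)))"
    using assms(1) unfolding poly_deg_le_def by blast
  obtain S' c' where S': "finite S'" "\<forall>\<alpha>\<in>S'. (\<Sum>i\<in>UNIV. \<alpha> i) \<le> k"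
     "\<forall>v. g v = (\<Sum>\<alpha>\<in>S'. c' \<alpha> * (\<Prod>i\<in>UNIV. (v $ i) ^ (\<alpha> i)))"
    using assms(2) unfolding poly_deg_le_def by blast
  show ?thesis
    apply (rule pdl_intro[where J="S <+> S'" and \<alpha>="case_sum id id" and e="case_sum c c'"])
    using S S' by (auto simp: sum.Plus comp_def)
qed

lemma pdl_scale:
  assumes "poly_deg_le k f"
  shows "poly_deg_le k (\<lambda>v. a * f v)"
proof -
  obtain S c where S: "finite S" "\<forall>\<alpha>\<in>S. (\<Sum>i\<in>UNIV. \<alpha> i) \<le> k"
     "\<forall>v. f v = (\<Sum>\<alpha>\<in>S. c \<alpha> * (\<Prod>i\<in>UNIV. (v $ i) ^ (\<alpha> i)))"
    using assms(1) unfolding poly_deg_le_def by blast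
  show ?thesis
    apply (rule pdl_intro[where J="S" and \<alpha>="id" and e="\<lambda>\<alpha>. a * c \<alpha>"])
    using S by (auto simp: sum_distrib_left mult.assoc)
qed

lemma pdl_mult:
  assumes "poly_deg_le k f" "poly_deg_le k' g"
  shows "poly_deg_le (k + k') (\<lambda>v. f v * g v)"
proof -
  obtain S c where S: "finite S" "\<forall>\<alpha>\<in>S. (\<Sum>i\<in>UNIV. \<alpha> i) \<le> k"
     "\<forall>v. f v = (\<Sum>\<alpha>\<in>S. c \<alpha> * (\<Prod>i\<in>UNIV. (v $ i) ^ (\<alpha> i)))"
    using assms(1) unfolding poly_deg_le_def by blast
  obtain S' c' where S': "finite S'" "\<forall>\<alpha>\<in>S'. (\<Sum>i\<in>UNIV. \<alpha> i) \<le> k'"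
     "\<forall>v. g v = (\<Sum>\<alpha>\<in>S'. c' \<alpha> * (\<Prod>i\<in>UNIV. (v $ i) ^ (\<alpha> i)))"
    using assms(2) unfolding poly_deg_le_def by blast
  show ?thesis
  proof (rule pdl_intro[where J="S \<times> S'" and \<alpha>="\<lambda>(\<beta>,\<gamma>) i. \<beta> i + \<gamma> i" and e="\<lambda>(\<beta>,\<gamma>). c \<beta> * c' \<gamma>"])
    show "finite (S \<times> S')" using S S' by auto
    show "\<forall>j\<in>S \<times> S'. (\<Sum>i\<in>UNIV. (case j of (\<beta>, \<gamma>) \<Rightarrow> \<lambda>i. \<beta> i + \<gamma> i) i) \<le> k + k'"
      using S S' by (auto simp: sum.distrib add_mono)
    show "\<forall>v. f v * g v = (\<Sum>j\<in>S \<times> S'. (case j of (\<beta>, \<gamma>) \<Rightarrow> c \<beta> * c' \<gamma>) *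
             (\<Prod>i\<in>UNIV. v $ i ^ (case j of (\<beta>, \<gamma>) \<Rightarrow> \<lambda>i. \<beta> i + \<gamma> i) i))"
      using S S' by (auto simp: sum_product sum.cartesian_product power_add prod.distrib
          intro!: sum.cong)
  qed
qed

lemma pdl_mono: "poly_deg_le k f \<Longrightarrow> k \<le> k' \<Longrightarrow> poly_deg_le k' f"
  unfolding poly_deg_le_def by (meson order_trans)

lemma pdl_const: "poly_deg_le k (\<lambda>v::real^'d. a)"
  by (rule pdl_intro[where J="{()}" and \<alpha>="\<lambda>_ _. 0" and e="\<lambda>_. a"]) auto

lemma pdl_coord: "poly_deg_le 1 (\<lambda>v::real^'d. v $ i)"
proof (rule pdl_intro[where J="{()}" and \<alpha>="\<lambda>_ j. if j = i then 1 else 0" and e="\<lambda>_. 1"])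
  show "\<forall>v::real^'d. v $ i = (\<Sum>j\<in>{()}. 1 * (\<Prod>ia\<in>UNIV. v $ ia ^ (if ia = i then 1 else 0)))"
  proof
    fix v :: "real^'d"
    have "(\<Prod>ia\<in>UNIV. v $ ia ^ (if ia = i then 1 else 0)) = (\<Prod>ia\<in>UNIV. if ia = i then v $ ia else 1)"
      by (intro prod.cong) auto
    also have "\<dots> = v $ i" by (subst prod.delta) auto
    finally show "v $ i = (\<Sum>j\<in>{()}. 1 * (\<Prod>ia\<in>UNIV. v $ ia ^ (if ia = i then 1 else 0)))" by simp
  qed
qed auto

lemma pdl_diff:
  assumes "poly_deg_le k f" "poly_deg_le k g"
  shows "poly_deg_le k (\<lambda>v. f v - g v)"
  using pdl_add[OF assms(1) pdl_scale[OF assms(2), of "-1"]] by simp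

lemma pdl_sum:
  assumes "finite A" "\<forall>x\<in>A. poly_deg_le k (f x)"
  shows "poly_deg_le k (\<lambda>v. \<Sum>x\<in>A. f x v)"
  using assms by (induction A rule: finite_induct) (auto simp: pdl_const intro!: pdl_add)

lemma pdl_prod:
  assumes "finite A" "\<forall>x\<in>A. poly_deg_le (d x) (f x)"
  shows "poly_deg_le (\<Sum>x\<in>A. d x) (\<lambda>v. \<Prod>x\<in>A. f x v)"
  using assms by (induction A rule: finite_induct) (auto simp: pdl_const intro!: pdl_mult)

definition sos :: "nat \<Rightarrow> (real^'d \<Rightarrow> real) \<Rightarrow> bool" where
  "sos n f \<longleftrightarrow> (\<exists>qs. (\<forall>q\<in>set qs. poly_deg_le n q) \<and> (\<forall>v. f v = (\<Sum>q\<leftarrow>qs. (q v)^2)))"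

lemma sos_zero: "sos n (\<lambda>v. 0)"
  unfolding sos_def by (rule exI[of _ "[]"]) auto

lemma sos_cong: "sos n f \<Longrightarrow> (\<And>v. f v = g v) \<Longrightarrow> sos n g"
  unfolding sos_def by metis

lemma sos_add: "sos n f \<Longrightarrow> sos n g \<Longrightarrow> sos n (\<lambda>v. f v + g v)"
  unfolding sos_def
  apply (elim exE conjE)
  subgoal for qs rs by (rule exI[of _ "qs @ rs"]) auto
  done

lemma sos_sq: "poly_deg_le n q \<Longrightarrow> sos n (\<lambda>v. (q v)^2)"
  unfolding sos_def by (rule exI[of _ "[q]"]) auto

lemma sos_scale:
  assumes "sos n f" "0 \<le> c"
  shows "sos n (\<lambda>v. c * f v)"
proof -
  obtain qs where qs: "\<forall>q\<in>set qs. poly_deg_le n q" "\<forall>v. f v = (\<Sum>q\<leftarrow>qs. (q v)^2)"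
    using assms unfolding sos_def by blast
  show ?thesis unfolding sos_def
  proof (rule exI[of _ "map (\<lambda>q v. sqrt c * q v) qs"], intro conjI allI)
    show "\<forall>q\<in>set (map (\<lambda>q v. sqrt c * q v) qs). poly_deg_le n q"
      using qs by (auto intro: pdl_scale)
    fix v
    have "c * f v = (\<Sum>q\<leftarrow>qs. c * (q v)^2)" using qs by (simp add: sum_list_const_mult)
    also have "\<dots> = (\<Sum>q\<leftarrow>map (\<lambda>q v. sqrt c * q v) qs. (q v)^2)"
      using assms(2) by (simp add: comp_def power_mult_distrib)
    finally show "c * f v = (\<Sum>q\<leftarrow>map (\<lambda>q v. sqrt c * q v) qs. (q v)^2)" .
  qed
qed

lemma sos_mono: "sos n f \<Longrightarrow> n \<le> m \<Longrightarrow> sos m f"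
  unfolding sos_def using pdl_mono by metis

lemma sos_sum:
  assumes "finite A" "\<forall>x\<in>A. sos n (f x)"
  shows "sos n (\<lambda>v. \<Sum>x\<in>A. f x v)"
  using assms by (induction A rule: finite_induct) (auto simp: sos_zero intro!: sos_add)

lemma sos_sum_list: "(\<forall>q\<in>set qs. poly_deg_le n q) \<Longrightarrow> sos n (\<lambda>v. \<Sum>q\<leftarrow>qs. (q v)^2)"
  unfolding sos_def by blast

lemma sos_mult:
  assumes "sos a f" "sos b g"
  shows "sos (a + b) (\<lambda>v. f v * g v)"
proof -
  obtain qs where qs: "\<forall>q\<in>set qs. poly_deg_le a q" "\<forall>v. f v = (\<Sum>q\<leftarrow>qs. (q v)^2)"
    using assms unfolding sos_def by blast
  obtain rs where rs: "\<forall>q\<in>set rs. poly_deg_le b q" "\<forall>v. g v = (\<Sum>q\<leftarrow>rs. (q v)^2)"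
    using assms unfolding sos_def by blast
  have inner: "poly_deg_le a q \<Longrightarrow> sos (a + b) (\<lambda>v. (q v)^2 * (\<Sum>r\<leftarrow>rs. (r v)^2))" for q
    using rs(1)
  proof (induction rs)
    case Nil then show ?case by (simp add: sos_zero)
  next
    case (Cons r rs)
    have "sos (a+b) (\<lambda>v. (q v * r v)^2)"
      using Cons by (intro sos_sq pdl_mult) auto
    then have "sos (a+b) (\<lambda>v. (q v * r v)^2 + (q v)^2 * (\<Sum>r\<leftarrow>rs. (r v)^2))"
      using Cons by (intro sos_add) auto
    then show ?case by (rule sos_cong) (simp add: algebra_simps power_mult_distrib)
  qed
  have "sos (a + b) (\<lambda>v. (\<Sum>q\<leftarrow>qs. (q v)^2) * (\<Sum>r\<leftarrow>rs. (r v)^2))"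
    using qs(1)
  proof (induction qs)
    case Nil then show ?case by (simp add: sos_zero)
  next
    case (Cons q qs)
    then have "sos (a+b) (\<lambda>v. (q v)^2 * (\<Sum>r\<leftarrow>rs. (r v)^2) + (\<Sum>q\<leftarrow>qs. (q v)^2) * (\<Sum>r\<leftarrow>rs. (r v)^2))"
      by (intro sos_add inner) auto
    then show ?case by (rule sos_cong) (simp add: algebra_simps)
  qed
  then show ?thesis by (rule sos_cong) (simp add: qs rs)
qed

lemma sos_one: "sos n (\<lambda>v. 1)"
  using sos_sq[OF pdl_const[of n 1]] by simp

lemma sos_prod:
  assumes "finite A" "\<forall>x\<in>A. sos (d x) (f x)"
  shows "sos (\<Sum>x\<in>A. d x) (\<lambda>v. \<Prod>x\<in>A. f x v)"
  using assms by (induction A rule: finite_induct) (auto simp: sos_one intro!: sos_mult)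


definition qf :: "'w set \<Rightarrow> ('w \<Rightarrow> 'w \<Rightarrow> real) \<Rightarrow> ('w \<Rightarrow> real) \<Rightarrow> real" where
  "qf W G h = (\<Sum>w\<in>W. \<Sum>w'\<in>W. G w w' * h w * h w')"
lemma qf_insert:
  assumes "finite W" "w0 \<notin> W" "\<forall>w\<in>insert w0 W. \<forall>w'\<in>insert w0 W. G w w' = G w' w"
  shows "qf (insert w0 W) G h = G w0 w0 * (h w0)^2 + 2 * h w0 * (\<Sum>w\<in>W. G w0 w * h w) + qf W G h"
proof -
  have "qf (insert w0 W) G h = (G w0 w0 * h w0 * h w0 + (\<Sum>w'\<in>W. G w0 w' * h w0 * h w'))
      + (\<Sum>w\<in>W. G w w0 * h w * h w0 + (\<Sum>w'\<in>W. G w w' * h w * h w'))"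
    unfolding qf_def by (simp only: sum.insert[OF assms(1,2)])
  also have "\<dots> = (G w0 w0 * h w0 * h w0 + (\<Sum>w'\<in>W. G w0 w' * h w0 * h w'))
      + ((\<Sum>w\<in>W. G w w0 * h w * h w0) + qf W G h)"
    unfolding qf_def by (simp only: sum.distrib)
  also have "(\<Sum>w\<in>W. G w w0 * h w * h w0) = (\<Sum>w\<in>W. G w0 w * h w0 * h w)"
  proof (rule sum.cong)
    fix w assume "w \<in> W"
    then have "G w w0 = G w0 w" using assms(3) by blast
    then show "G w w0 * h w * h w0 = G w0 w * h w0 * h w" by simp
  qed simp
  also have "(\<Sum>w'\<in>W. G w0 w' * h w0 * h w') = h w0 * (\<Sum>w\<in>W. G w0 w * h w)"
    by (simp add: sum_distrib_left mult_ac)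
  finally show ?thesis by (simp add: power2_eq_square)
qed
lemma qf_cong: "(\<And>w. w \<in> W \<Longrightarrow> h w = h' w) \<Longrightarrow> qf W G h = qf W G h'"
  unfolding qf_def by (auto intro!: sum.cong)

lemma gram_sos:
  fixes G :: "'w \<Rightarrow> 'w \<Rightarrow> real" and zz :: "'w \<Rightarrow> real^'d \<Rightarrow> real"
  assumes "finite W" "\<forall>w\<in>W. \<forall>w'\<in>W. G w w' = G w' w" "\<forall>x. 0 \<le> qf W G x"
    "\<forall>w\<in>W. poly_deg_le n (zz w)"
  shows "sos n (\<lambda>v. qf W G (\<lambda>w. zz w v))"
  using assms
proof (induction W arbitrary: G rule: finite_induct)
  case empty
  then show ?case by (simp add: qf_def sos_zero)
next
  case (insert w0 W)
  note qi = qf_insert[OF insert(1,2) insert(4)]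
  define g where "g = G w0 w0"
  have symW: "\<forall>w\<in>W. \<forall>w'\<in>W. G w w' = G w' w" using insert(4) by auto
  have psdW: "0 \<le> qf W G x" for x
  proof -
    have "0 \<le> qf (insert w0 W) G (x(w0 := 0))" using insert(5) by auto
    also have "\<dots> = qf W G (x(w0:=0))"
      using qi[of "x(w0:=0)"] by simp
    also have "\<dots> = qf W G x" using insert(2) by (intro qf_cong) auto
    finally show ?thesis .
  qed
  have Wsum0: "(\<Sum>w\<in>W. G w0 w * (x(w0 := a)) w) = (\<Sum>w\<in>W. G w0 w * x w)" for x a
    using insert(2) by (intro sum.cong) auto
  have qW0: "qf W G (x(w0 := a)) = qf W G x" for x a
    using insert(2) by (intro qf_cong) auto
  have g0: "0 \<le> g"
  proof -
    have "0 \<le> qf (insert w0 W) G ((\<lambda>_. 0)(w0 := 1))" using insert(5) by auto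
    also have "\<dots> = g" unfolding qi g_def Wsum0 qW0 by (simp add: qf_def)
    finally show ?thesis .
  qed
  show ?case
  proof (cases "g = 0")
    case True
    have off: "G w0 w = 0" if "w \<in> W" for w
    proof (rule ccontr)
      assume ne: "G w0 w \<noteq> 0"
      define lam where "lam = - (G w w + 1) / (2 * G w0 w)"
      define x where "x = ((\<lambda>_. 0)(w := 1))(w0 := lam)"
      have "0 \<le> qf (insert w0 W) G x" using insert(5) by auto
      also have "\<dots> = 2 * lam * (\<Sum>u\<in>W. G w0 u * ((\<lambda>_. 0)(w := 1)) u) + qf W G ((\<lambda>_. 0)(w := 1))"
        unfolding qi x_def Wsum0 qW0 using True g_def by simp
      also have "(\<Sum>u\<in>W. G w0 u * ((\<lambda>_. 0)(w := 1)) u) = G w0 w"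
        using that insert(1) by (simp add: if_distrib sum.delta cong: if_cong)
      also have "qf W G ((\<lambda>_. 0)(w := 1)) = G w w"
      proof -
        have "qf W G ((\<lambda>_. 0)(w := 1)) = (\<Sum>wa\<in>W. if wa = w then G w w else 0)"
          unfolding qf_def
        proof (rule sum.cong[OF refl])
          fix wa assume "wa \<in> W"
          have "(\<Sum>w'\<in>W. G wa w' * ((\<lambda>_. 0)(w := 1)) wa * ((\<lambda>_. 0)(w := 1)) w')
               = (\<Sum>w'\<in>W. if w' = w then (if wa = w then G w w else 0) else 0)"
            by (rule sum.cong) auto
          also have "\<dots> = (if wa = w then G w w else 0)"
            using that insert(1) by (simp only: sum.delta) simp
          finally show "(\<Sum>w'\<in>W. G wa w' * ((\<lambda>_. 0)(w := 1)) wa * ((\<lambda>_. 0)(w := 1)) w')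
               = (if wa = w then G w w else 0)" .
        qed
        also have "\<dots> = G w w" using that insert(1) by (simp only: sum.delta) simp
        finally show ?thesis .
      qed
      also have "2 * lam * G w0 w + G w w = -1" using ne unfolding lam_def by (simp add: field_simps)
      finally show False by simp
    qed
    have "sos n (\<lambda>v. qf W G (\<lambda>w. zz w v))"
      using insert.IH[of G] symW psdW insert(6) by blast
    then show ?thesis
      by (rule sos_cong) (simp add: qi off True[unfolded g_def])
  next
    case False
    then have gp: "0 < g" using g0 by simp
    define G' where "G' = (\<lambda>w w'. G w w' - G w0 w * G w0 w' / g)"
    have key: "qf W G' h = qf W G h - (\<Sum>w\<in>W. G w0 w * h w)^2 / g" for h
    proof -
      have "qf W G' h = qf W G h - (\<Sum>w\<in>W. \<Sum>w'\<in>W. (G w0 w * h w) * (G w0 w' * h w')) / g"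
        unfolding qf_def G'_def
        by (simp add: sum_subtractf sum_divide_distrib left_diff_distrib algebra_simps)
      also have "(\<Sum>w\<in>W. \<Sum>w'\<in>W. (G w0 w * h w) * (G w0 w' * h w')) = (\<Sum>w\<in>W. G w0 w * h w)^2"
        by (simp add: power2_eq_square sum_product)
      finally show ?thesis .
    qed
    have symG': "\<forall>w\<in>W. \<forall>w'\<in>W. G' w w' = G' w' w" using symW unfolding G'_def by auto
    have psdG': "0 \<le> qf W G' x" for x
    proof -
      define S where "S = (\<Sum>w\<in>W. G w0 w * x w)"
      have "0 \<le> qf (insert w0 W) G (x(w0 := - S / g))" using insert(5) by auto
      also have "\<dots> = g * (S/g)^2 - 2 * (S / g) * S + qf W G x"
        unfolding qi Wsum0 qW0 g_def[symmetric] S_def by simp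
      also have "\<dots> = qf W G' x" unfolding key S_def using gp
        by (simp add: power2_eq_square field_simps)
      finally show ?thesis .
    qed
    have IH: "sos n (\<lambda>v. qf W G' (\<lambda>w. zz w v))"
      using insert.IH[of G'] symG' psdG' insert(6) by blast
    have sq: "sos n (\<lambda>v. ((g * zz w0 v + (\<Sum>w\<in>W. G w0 w * zz w v)) / sqrt g)^2)"
      using insert(6) insert(1)
      by (intro sos_sq) (auto intro!: pdl_add pdl_scale pdl_sum simp: divide_inverse mult.commute[of _ "inverse _"])
    have "sos n (\<lambda>v. ((g * zz w0 v + (\<Sum>w\<in>W. G w0 w * zz w v)) / sqrt g)^2 + qf W G' (\<lambda>w. zz w v))"
      by (rule sos_add[OF sq IH])
    then show ?thesis
    proof (rule sos_cong)
      fix v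
      show "((g * zz w0 v + (\<Sum>w\<in>W. G w0 w * zz w v)) / sqrt g)\<^sup>2 + qf W G' (\<lambda>w. zz w v) =
            qf (insert w0 W) G (\<lambda>w. zz w v)"
        unfolding qi key g_def[symmetric] using gp
        by (simp add: power_divide power2_eq_square field_simps)
    qed
  qed
qed



lemma sos_integral:
  fixes Q :: "'a measure" and c :: "'w \<Rightarrow> 'a \<Rightarrow> real" and zz :: "'w \<Rightarrow> real^'d \<Rightarrow> real"
  assumes fin: "finite W" and deg: "\<forall>w\<in>W. poly_deg_le n (zz w)"
    and int: "\<forall>w\<in>W. \<forall>w'\<in>W. integrable Q (\<lambda>\<omega>. c w \<omega> * c w' \<omega>)"
  shows "sos n (\<lambda>v. \<integral>\<omega>. (\<Sum>w\<in>W. c w \<omega> * zz w v)^2 \<partial>Q)"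
proof -
  define G where "G = (\<lambda>w w'. \<integral>\<omega>. c w \<omega> * c w' \<omega> \<partial>Q)"
  have idt: "(\<integral>\<omega>. (\<Sum>w\<in>W. c w \<omega> * h w)^2 \<partial>Q) = qf W G h" for h
  proof -
    have "(\<integral>\<omega>. (\<Sum>w\<in>W. c w \<omega> * h w)^2 \<partial>Q)
        = (\<integral>\<omega>. (\<Sum>w\<in>W. \<Sum>w'\<in>W. (c w \<omega> * c w' \<omega>) * (h w * h w')) \<partial>Q)"
      by (simp add: power2_eq_square sum_product mult_ac)
    also have "\<dots> = (\<Sum>w\<in>W. \<Sum>w'\<in>W. (\<integral>\<omega>. (c w \<omega> * c w' \<omega>) * (h w * h w') \<partial>Q))"
      using int by (simp add: integral_sum integrable_sum)
    also have "\<dots> = qf W G h"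
      unfolding qf_def G_def by (simp add: mult_ac)
    finally show ?thesis .
  qed
  have "sos n (\<lambda>v. qf W G (\<lambda>w. zz w v))"
  proof (rule gram_sos[OF fin _ _ deg])
    show "\<forall>w\<in>W. \<forall>w'\<in>W. G w w' = G w' w" unfolding G_def by (simp add: mult.commute)
    show "\<forall>x. 0 \<le> qf W G x"
    proof
      fix x show "0 \<le> qf W G x" unfolding idt[symmetric] by simp
    qed
  qed
  then show ?thesis by (rule sos_cong) (simp add: idt)
qed



lemma prod_lessThan_add: "(\<Prod>k<a+b. F k) = (\<Prod>k<a. F k) * (\<Prod>k<b. F (a+k))"
  for F :: "nat \<Rightarrow> 'a::comm_monoid_mult"
  by (induction b) (auto simp: mult_ac)

lemma prod_append_nth:
  assumes "length xs = a" "length ys = b"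
  shows "(\<Prod>k<a+b. g ((xs@ys)!k)) = (\<Prod>k<a. g (xs!k)) * (\<Prod>k<b. g (ys!k))"
  unfolding prod_lessThan_add using assms by (simp add: nth_append)

lemma L_exp:
  fixes f :: "nat \<Rightarrow> 'd::finite \<Rightarrow> 'r::comm_semiring_1"
  shows "(\<Prod>k<m. \<Sum>i\<in>UNIV. f k i) = (\<Sum>is\<in>{is. length is = m}. \<Prod>k<m. f k (is!k))"
proof (induction m)
  case 0
  have "{is::'d list. length is = 0} = {[]}" by auto
  then show ?case by simp
next
  case (Suc m)
  have "(\<Prod>k<Suc m. \<Sum>i\<in>UNIV. f k i) = (\<Sum>is\<in>{is. length is = m}. \<Prod>k<m. f k (is!k)) * (\<Sum>i\<in>UNIV. f m i)"
    using Suc by simp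
  also have "\<dots> = (\<Sum>p\<in>{is. length is = m} \<times> UNIV. (\<Prod>k<m. f k (fst p!k)) * f m (snd p))"
    by (simp add: sum_product sum.cartesian_product case_prod_beta)
  also have "\<dots> = (\<Sum>is\<in>{is. length is = Suc m}. \<Prod>k<Suc m. f k (is!k))"
  proof (rule sum.reindex_bij_witness[where j="\<lambda>p. fst p @ [snd p]" and i="\<lambda>is. (butlast is, last is)"])
    fix p :: "'d list \<times> 'd" assume "p \<in> {is. length is = m} \<times> UNIV"
    then show "(\<Prod>k<Suc m. f k ((fst p @ [snd p]) ! k)) = (\<Prod>k<m. f k (fst p ! k)) * f m (snd p)"
      by (auto simp: nth_append intro!: prod.cong)
  next
    fix js :: "'d list" assume "js \<in> {is. length is = Suc m}"
    then show "fst (butlast js, last js) @ [snd (butlast js, last js)] = js"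
      by (cases js rule: rev_cases) auto
  qed auto
  finally show ?case .
qed

lemma tensor_poly_alt: "tensor_poly m T v = (\<Sum>is\<in>{is. length is = m}. T is * (\<Prod>k<m. v $ (is ! k)))"
  unfolding tensor_poly_def by simp

lemma tensor_poly_mult:
  "tensor_poly (a+b) (\<lambda>is. T (take a is) * S (drop a is)) v = tensor_poly a T v * tensor_poly b S v"
proof -
  have "tensor_poly a T v * tensor_poly b S v =
     (\<Sum>p\<in>{is. length is = a} \<times> {is. length is = b}.
        (T (fst p) * (\<Prod>k<a. v $ (fst p ! k))) * (S (snd p) * (\<Prod>k<b. v $ (snd p ! k))))"
    unfolding tensor_poly_alt by (simp add: sum_product sum.cartesian_product case_prod_beta)
  also have "\<dots> = tensor_poly (a+b) (\<lambda>is. T (take a is) * S (drop a is)) v"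
    unfolding tensor_poly_alt
  proof (rule sum.reindex_bij_witness[where j="\<lambda>p. fst p @ snd p" and i="\<lambda>is. (take a is, drop a is)"])
    fix p :: "'a list \<times> 'a list" assume "p \<in> {is. length is = a} \<times> {is. length is = b}"
    then show "T (take a (fst p @ snd p)) * S (drop a (fst p @ snd p)) * (\<Prod>k<a + b. v $ ((fst p @ snd p) ! k))
        = T (fst p) * (\<Prod>k<a. v $ (fst p ! k)) * (S (snd p) * (\<Prod>k<b. v $ (snd p ! k)))"
      by (auto simp: prod_append_nth mult_ac)
  qed auto
  finally show ?thesis by simp
qed

lemma tensor_prod_list_poly:
  "tensor_poly (sum_list (map fst L)) (tensor_prod_list L) v = prod_list (map (\<lambda>(m,T). tensor_poly m T v) L)"
proof (induction L)
  case Nil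
  have "{is::'a list. length is = 0} = {[]}" by auto
  then show ?case by (simp add: tensor_poly_alt)
next
  case (Cons x L)
  obtain m T where x: "x = (m, T)" by force
  show ?case unfolding x using Cons
    by (simp add: tensor_poly_mult)
qed



lemma pow_sum_le: "0 \<le> a \<Longrightarrow> 0 \<le> b \<Longrightarrow> (a + b)^n \<le> 2^n * (a^n + b^n)" for a b :: real
proof -
  assume ab: "0 \<le> a" "0 \<le> b"
  have "(a+b)^n \<le> (2 * max a b)^n" using ab by (intro power_mono) auto
  also have "\<dots> = 2^n * (max a b)^n" by (simp add: power_mult_distrib)
  also have "(max a b)^n \<le> a^n + b^n" using ab by (cases "a \<le> b") (auto simp: max_def)
  then have "2^n * (max a b)^n \<le> 2^n * (a^n + b^n)" by simp
  finally show ?thesis .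
qed

locale momset =
  fixes p :: "(real^'d) measure" and t :: nat
  assumes t2: "t \<ge> 2" and ps: "prob_space p" and sb: "sets p = sets borel"
    and intN: "integrable p (\<lambda>x. norm x ^ (2*t))"
begin

definition Cf :: "real^'d \<Rightarrow> 'd list \<Rightarrow> real" where
  "Cf x js = (\<Prod>k<length js. (x - mean_vec p) $ (js ! k))"

definition Vm :: "real^'d \<Rightarrow> 'd list \<Rightarrow> real" where
  "Vm v js = (\<Prod>k<length js. v $ (js ! k))"

definition Y :: "real^'d \<Rightarrow> real^'d \<Rightarrow> real" where
  "Y x v = (\<Sum>i\<in>UNIV. (x - mean_vec p) $ i * v $ i)"

definition mom :: "nat \<Rightarrow> real^'d \<Rightarrow> real" where
  "mom j v = tensor_poly j (moment_tensor p j) v"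

lemma Cf_append: "Cf x (xs @ ys) = Cf x xs * Cf x ys"
  unfolding Cf_def using prod_append_nth[of xs "length xs" ys "length ys"] by simp

lemma meas_Cf: "(\<lambda>x. Cf x js) \<in> borel_measurable p"
proof -
  have "(\<lambda>x. Cf x js) \<in> borel_measurable borel"
    unfolding Cf_def by (intro borel_measurable_prod borel_measurable_continuous_onI continuous_intros)
  then show ?thesis using measurable_cong_sets[OF sb refl] by blast
qed

lemma int_Cf:
  assumes "length js \<le> 2*t"
  shows "integrable p (\<lambda>x. Cf x js)"
proof (rule Bochner_Integration.integrable_bound)
  let ?m = "mean_vec p"
  show "integrable p (\<lambda>x. 1 + 2^(2*t) * (norm x ^ (2*t) + norm ?m ^ (2*t)))"
    using intN prob_space.finite_measure[OF ps] by (intro Bochner_Integration.integrable_add integrable_mult_right finite_measure.integrable_const) auto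
  show "(\<lambda>x. Cf x js) \<in> borel_measurable p" by (rule meas_Cf)
  show "AE x in p. norm (Cf x js) \<le> norm (1 + 2^(2*t) * (norm x ^ (2*t) + norm ?m ^ (2*t)))"
  proof (rule AE_I2)
    fix x
    have "norm (Cf x js) = (\<Prod>k<length js. \<bar>(x - ?m) $ (js ! k)\<bar>)"
      unfolding Cf_def by (simp add: abs_prod)
    also have "\<dots> \<le> (\<Prod>k<length js. norm (x - ?m))"
      by (intro prod_mono) (auto simp del: vector_minus_component intro: component_le_norm_cart)
    also have "\<dots> = norm (x - ?m) ^ length js" by simp
    also have "\<dots> \<le> 1 + norm (x - ?m) ^ (2*t)"
    proof (cases "norm (x - ?m) \<le> 1")
      case True
      then have "norm (x - ?m) ^ length js \<le> 1" by (simp add: power_le_one)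
      then show ?thesis by (smt (verit) zero_le_power norm_ge_zero)
    next
      case False
      then have "norm (x - ?m) ^ length js \<le> norm (x - ?m) ^ (2*t)"
        using assms by (intro power_increasing) auto
      then show ?thesis by simp
    qed
    also have "norm (x - ?m) ^ (2*t) \<le> (norm x + norm ?m) ^ (2*t)"
      by (intro power_mono norm_triangle_ineq4) auto
    also have "\<dots> \<le> 2^(2*t) * (norm x ^ (2*t) + norm ?m ^ (2*t))"
      by (intro pow_sum_le) auto
    finally show "norm (Cf x js) \<le> norm (1 + 2^(2*t) * (norm x ^ (2*t) + norm ?m ^ (2*t)))"
      by simp
  qed
qed

lemma Y_pow_exp: "Y x v ^ j = (\<Sum>js\<in>{js. length js = j}. Cf x js * Vm v js)"
proof -
  have "Y x v ^ j = (\<Prod>k<j. \<Sum>i\<in>UNIV. (x - mean_vec p) $ i * v $ i)"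
    unfolding Y_def by simp
  also have "\<dots> = (\<Sum>js\<in>{js. length js = j}. \<Prod>k<j. (x - mean_vec p) $ (js!k) * v $ (js!k))"
    by (rule L_exp)
  also have "\<dots> = (\<Sum>js\<in>{js. length js = j}. Cf x js * Vm v js)"
    unfolding Cf_def Vm_def by (intro sum.cong refl) (simp add: prod.distrib)
  finally show ?thesis .
qed

lemma mom_eq:
  assumes "j \<le> 2*t"
  shows "integrable p (\<lambda>x. Y x v ^ j)" "mom j v = (\<integral>x. Y x v ^ j \<partial>p)"
proof -
  have int: "integrable p (\<lambda>x. Cf x js * Vm v js)" if "js \<in> {js. length js = j}" for js
    using that assms by (intro integrable_mult_left int_Cf) auto
  show "integrable p (\<lambda>x. Y x v ^ j)"
    unfolding Y_pow_exp using int by (intro Bochner_Integration.integrable_sum) auto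
  have "(\<integral>x. Y x v ^ j \<partial>p) = (\<Sum>js\<in>{js. length js = j}. (\<integral>x. Cf x js * Vm v js \<partial>p))"
    unfolding Y_pow_exp using int by (intro Bochner_Integration.integral_sum) auto
  also have "\<dots> = (\<Sum>js\<in>{js. length js = j}. (\<integral>x. Cf x js \<partial>p) * Vm v js)"
    by simp
  also have "\<dots> = mom j v"
    unfolding mom_def tensor_poly_alt moment_tensor_def Cf_def Vm_def
    by (intro sum.cong refl) simp
  finally show "mom j v = (\<integral>x. Y x v ^ j \<partial>p)" by simp
qed

lemma mom0: "mom 0 v = 1"
  using mom_eq(2)[of 0 v] ps by (simp add: prob_space.prob_space)

end


context momset begin

lemma pdl_Vm: "poly_deg_le (length js) (\<lambda>v. Vm v js)"
proof -
  have "poly_deg_le (\<Sum>k<length js. 1) (\<lambda>v. \<Prod>k<length js. v $ (js ! k))"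
    apply (rule pdl_prod) apply simp apply (intro ballI) apply (rule pdl_coord) done
  then show ?thesis unfolding Vm_def by simp
qed

lemma PSF: "product_sigma_finite (\<lambda>_::nat. p)"
  unfolding product_sigma_finite_def using prob_space_imp_sigma_finite[OF ps] by simp

lemma prodY_integral:
  fixes N :: nat
  assumes "\<forall>s<N. e s \<le> 2*t"
  shows "integrable (PiM {..<N} (\<lambda>_. p)) (\<lambda>\<omega>. \<Prod>s<N. Y (\<omega> s) v ^ e s)"
    "(\<integral>\<omega>. (\<Prod>s<N. Y (\<omega> s) v ^ e s) \<partial>PiM {..<N} (\<lambda>_. p)) = (\<Prod>s<N. mom (e s) v)"
proof -
  show "integrable (PiM {..<N} (\<lambda>_. p)) (\<lambda>\<omega>. \<Prod>s<N. Y (\<omega> s) v ^ e s)"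
    using product_sigma_finite.product_integrable_prod[OF PSF, where I="{..<N}" and f="\<lambda>s x. Y x v ^ e s"] mom_eq(1) assms by auto
  show "(\<integral>\<omega>. (\<Prod>s<N. Y (\<omega> s) v ^ e s) \<partial>PiM {..<N} (\<lambda>_. p)) = (\<Prod>s<N. mom (e s) v)"
    using product_sigma_finite.product_integral_prod[OF PSF, where I="{..<N}" and f="\<lambda>s x. Y x v ^ e s"] mom_eq assms by auto
qed

lemma prodCf_integrable:
  fixes N :: nat
  assumes "\<forall>s<N. length (\<phi> s) \<le> t \<and> length (\<psi> s) \<le> t"
  shows "integrable (PiM {..<N} (\<lambda>_. p)) (\<lambda>\<omega>. (\<Prod>s<N. Cf (\<omega> s) (\<phi> s)) * (\<Prod>s<N. Cf (\<omega> s) (\<psi> s)))"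
proof -
  have "integrable (PiM {..<N} (\<lambda>_. p)) (\<lambda>\<omega>. \<Prod>s<N. Cf (\<omega> s) (\<phi> s @ \<psi> s))"
    using assms product_sigma_finite.product_integrable_prod[OF PSF, where I="{..<N}" and f="\<lambda>s x. Cf x (\<phi> s @ \<psi> s)"] int_Cf by force
  then show ?thesis by (simp add: Cf_append prod.distrib)
qed

lemma expandY:
  fixes N :: nat
  shows "(\<Prod>s<N. Y (\<omega> s) v ^ e s) =
   (\<Sum>\<phi>\<in>PiE {..<N} (\<lambda>s. {js. length js = e s}). (\<Prod>s<N. Cf (\<omega> s) (\<phi> s)) * (\<Prod>s<N. Vm v (\<phi> s)))"
proof -
  have "(\<Prod>s<N. Y (\<omega> s) v ^ e s) = (\<Prod>s<N. \<Sum>js\<in>{js. length js = e s}. Cf (\<omega> s) js * Vm v js)"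
    unfolding Y_pow_exp ..
  also have "\<dots> = (\<Sum>\<phi>\<in>PiE {..<N} (\<lambda>s. {js. length js = e s}). \<Prod>s<N. Cf (\<omega> s) (\<phi> s) * Vm v (\<phi> s))"
    by (rule prod_sum_PiE) (auto simp: finite_list_length)
  also have "\<dots> = (\<Sum>\<phi>\<in>PiE {..<N} (\<lambda>s. {js. length js = e s}). (\<Prod>s<N. Cf (\<omega> s) (\<phi> s)) * (\<Prod>s<N. Vm v (\<phi> s)))"
    by (simp add: prod.distrib)
  finally show ?thesis .
qed

lemma master:
  fixes N n :: nat and a b :: "nat \<Rightarrow> nat" and \<theta> :: real
  assumes sa: "(\<Sum>s<N. a s) = n" and sbb: "(\<Sum>s<N. b s) = n" and le: "\<forall>s<N. a s \<le> t \<and> b s \<le> t"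
  shows "sos n (\<lambda>v. (\<Prod>s<N. mom (2*a s) v) + \<theta>^2 * (\<Prod>s<N. mom (2*b s) v)
                    - 2*\<theta>*(\<Prod>s<N. mom (a s + b s) v))"
proof -
  define Q where "Q = PiM {..<N} (\<lambda>_. p)"
  define PA where "PA = PiE {..<N} (\<lambda>s. {js::'d list. length js = a s})"
  define PB where "PB = PiE {..<N} (\<lambda>s. {js::'d list. length js = b s})"
  define c where "c = (\<lambda>w \<omega>. case w of Inl \<phi> \<Rightarrow> (\<Prod>s<N. Cf (\<omega> s) (\<phi> s))
                                    | Inr \<psi> \<Rightarrow> -\<theta> * (\<Prod>s<N. Cf (\<omega> s) (\<psi> s)))"
  define zz where "zz = (\<lambda>w v. case w of Inl \<phi> \<Rightarrow> (\<Prod>s<N. Vm v (\<phi> s))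
                                    | Inr \<psi> \<Rightarrow> (\<Prod>s<N. Vm v (\<psi> s)))"
  define W where "W = PA <+> PB"
  have fA: "finite PA" unfolding PA_def
    by (auto intro!: finite_PiE simp: finite_list_length)
  have fB: "finite PB" unfolding PB_def
    by (auto intro!: finite_PiE simp: finite_list_length)
  have finW: "finite W" unfolding W_def using fA fB by simp
  have g: "(\<Sum>w\<in>W. c w \<omega> * zz w v) = (\<Prod>s<N. Y (\<omega> s) v ^ a s) - \<theta> * (\<Prod>s<N. Y (\<omega> s) v ^ b s)" for \<omega> v
    unfolding W_def sum.Plus[OF fA fB] expandY PA_def[symmetric] PB_def[symmetric]
    by (simp add: c_def zz_def comp_def sum_distrib_left sum_negf mult.assoc)
  have lenA: "\<phi> \<in> PA \<Longrightarrow> s < N \<Longrightarrow> length (\<phi> s) = a s" for \<phi> s unfolding PA_def by auto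
  have lenB: "\<phi> \<in> PB \<Longrightarrow> s < N \<Longrightarrow> length (\<phi> s) = b s" for \<phi> s unfolding PB_def by auto
  have deg: "\<forall>w\<in>W. poly_deg_le n (zz w)"
  proof
    fix w assume "w \<in> W"
    then consider (A) \<phi> where "\<phi> \<in> PA" "w = Inl \<phi>" | (B) \<phi> where "\<phi> \<in> PB" "w = Inr \<phi>"
      unfolding W_def by auto
    then show "poly_deg_le n (zz w)"
    proof cases
      case A
      have "poly_deg_le (\<Sum>s<N. length (\<phi> s)) (\<lambda>v. \<Prod>s<N. Vm v (\<phi> s))"
        by (intro pdl_prod) (auto intro: pdl_Vm)
      moreover have "(\<Sum>s<N. length (\<phi> s)) = n" using sa lenA[OF A(1)] by simp
      ultimately show ?thesis using A by (simp add: zz_def)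
    next
      case B
      have "poly_deg_le (\<Sum>s<N. length (\<phi> s)) (\<lambda>v. \<Prod>s<N. Vm v (\<phi> s))"
        by (intro pdl_prod) (auto intro: pdl_Vm)
      moreover have "(\<Sum>s<N. length (\<phi> s)) = n" using sbb lenB[OF B(1)] by simp
      ultimately show ?thesis using B by (simp add: zz_def)
    qed
  qed
  have lent: "w \<in> W \<Longrightarrow> \<exists>\<phi>. (\<forall>s<N. length (\<phi> s) \<le> t) \<and> (\<exists>\<alpha>. \<forall>\<omega>. c w \<omega> = \<alpha> * (\<Prod>s<N. Cf (\<omega> s) (\<phi> s)))" for w
  proof -
    assume "w \<in> W"
    then consider (A) \<phi> where "\<phi> \<in> PA" "w = Inl \<phi>" | (B) \<phi> where "\<phi> \<in> PB" "w = Inr \<phi>"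
      unfolding W_def by auto
    then show ?thesis
    proof cases
      case A then show ?thesis using lenA le
        by (intro exI[of _ \<phi>] conjI exI[of _ 1]) (auto simp: c_def)
    next
      case B then show ?thesis using lenB le
        by (intro exI[of _ \<phi>] conjI exI[of _ "-\<theta>"]) (auto simp: c_def)
    qed
  qed
  have int: "\<forall>w\<in>W. \<forall>w'\<in>W. integrable Q (\<lambda>\<omega>. c w \<omega> * c w' \<omega>)"
  proof (intro ballI)
    fix w w' assume "w \<in> W" "w' \<in> W"
    obtain \<phi> \<alpha> where \<phi>: "\<forall>s<N. length (\<phi> s) \<le> t" "\<forall>\<omega>. c w \<omega> = \<alpha> * (\<Prod>s<N. Cf (\<omega> s) (\<phi> s))"
      using lent[OF \<open>w \<in> W\<close>] by blast
    obtain \<psi> \<beta> where \<psi>: "\<forall>s<N. length (\<psi> s) \<le> t" "\<forall>\<omega>. c w' \<omega> = \<beta> * (\<Prod>s<N. Cf (\<omega> s) (\<psi> s))"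
      using lent[OF \<open>w' \<in> W\<close>] by blast
    have "integrable Q (\<lambda>\<omega>. (\<alpha> * \<beta>) * ((\<Prod>s<N. Cf (\<omega> s) (\<phi> s)) * (\<Prod>s<N. Cf (\<omega> s) (\<psi> s))))"
      unfolding Q_def using \<phi>(1) \<psi>(1) by (intro integrable_mult_right prodCf_integrable) auto
    then show "integrable Q (\<lambda>\<omega>. c w \<omega> * c w' \<omega>)" using \<phi>(2) \<psi>(2) by (simp add: mult_ac)
  qed
  have S: "sos n (\<lambda>v. \<integral>\<omega>. (\<Sum>w\<in>W. c w \<omega> * zz w v)^2 \<partial>Q)"
    by (rule sos_integral[OF finW deg int])
  show ?thesis
  proof (rule sos_cong[OF S])
    fix v
    have e1: "\<forall>s<N. 2 * a s \<le> 2*t" "\<forall>s<N. 2 * b s \<le> 2*t" "\<forall>s<N. a s + b s \<le> 2*t" using le by auto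
    have sq: "((\<Prod>s<N. Y (\<omega> s) v ^ a s) - \<theta> * (\<Prod>s<N. Y (\<omega> s) v ^ b s))^2
       = (\<Prod>s<N. Y (\<omega> s) v ^ (2 * a s)) + \<theta>^2 * (\<Prod>s<N. Y (\<omega> s) v ^ (2 * b s))
         - 2 * \<theta> * (\<Prod>s<N. Y (\<omega> s) v ^ (a s + b s))" for \<omega>
    proof -
      have "(\<Prod>s<N. Y (\<omega> s) v ^ (2 * a s)) = (\<Prod>s<N. Y (\<omega> s) v ^ a s)^2"
        by (simp add: power_mult prod_power_distrib[symmetric] mult.commute)
      moreover have "(\<Prod>s<N. Y (\<omega> s) v ^ (2 * b s)) = (\<Prod>s<N. Y (\<omega> s) v ^ b s)^2"
        by (simp add: power_mult prod_power_distrib[symmetric] mult.commute)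
      moreover have "(\<Prod>s<N. Y (\<omega> s) v ^ (a s + b s)) = (\<Prod>s<N. Y (\<omega> s) v ^ a s) * (\<Prod>s<N. Y (\<omega> s) v ^ b s)"
        by (simp add: power_add prod.distrib)
      ultimately show ?thesis by (simp add: power2_eq_square algebra_simps)
    qed
    have "(\<integral>\<omega>. (\<Sum>w\<in>W. c w \<omega> * zz w v)^2 \<partial>Q)
        = (\<integral>\<omega>. (\<Prod>s<N. Y (\<omega> s) v ^ (2 * a s)) + \<theta>^2 * (\<Prod>s<N. Y (\<omega> s) v ^ (2 * b s))
         - 2 * \<theta> * (\<Prod>s<N. Y (\<omega> s) v ^ (a s + b s)) \<partial>Q)"
      unfolding g sq ..
    also have "\<dots> = (\<Prod>s<N. mom (2*a s) v) + \<theta>^2 * (\<Prod>s<N. mom (2*b s) v)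
                    - 2*\<theta>*(\<Prod>s<N. mom (a s + b s) v)"
      unfolding Q_def using prodY_integral[OF e1(1)] prodY_integral[OF e1(2)] prodY_integral[OF e1(3)]
      by (simp add: Bochner_Integration.integral_diff Bochner_Integration.integral_add)
    finally show "(\<integral>\<omega>. (\<Sum>w\<in>W. c w \<omega> * zz w v)^2 \<partial>Q) = (\<Prod>s<N. mom (2*a s) v) + \<theta>^2 * (\<Prod>s<N. mom (2*b s) v)
                    - 2*\<theta>*(\<Prod>s<N. mom (a s + b s) v)" .
  qed
qed

end


context momset begin

lemma mom_sos: "k \<le> t \<Longrightarrow> sos k (mom (2*k))"
  using master[where N=1 and n=k and a="\<lambda>_. k" and b="\<lambda>_. k" and \<theta>=0] by simp

lemma second_diff:
  assumes "1 \<le> j" "j + 1 \<le> n" "j + 1 \<le> t" "n - j + 1 \<le> t"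
  shows "sos n (\<lambda>v. mom (2*(j+1)) v * mom (2*(n-(j+1))) v + mom (2*(j-1)) v * mom (2*(n-(j-1))) v
                    - 2 * (mom (2*j) v * mom (2*(n-j)) v))"
proof -
  define a where "a = (\<lambda>s::nat. if s = 0 then j+1 else n-j-1)"
  define b where "b = (\<lambda>s::nat. if s = 0 then j-1 else n-j+1)"
  have "sos n (\<lambda>v. (\<Prod>s<2. mom (2*a s) v) + 1^2 * (\<Prod>s<2. mom (2*b s) v)
                    - 2*1*(\<Prod>s<2. mom (a s + b s) v))"
    by (rule master) (use assms in \<open>auto simp: a_def b_def numeral_2_eq_2 lessThan_Suc\<close>)
  then show ?thesis
  proof (rule sos_cong)
    fix v
    have e1: "a 0 + b 0 = 2*j" "a 1 + b 1 = 2*(n-j)" using assms by (auto simp: a_def b_def)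
    have e2: "2 * a 1 = 2*(n-(j+1))" "2 * b 1 = 2*(n-(j-1))" "2 * a 0 = 2*(j+1)" "2 * b 0 = 2*(j-1)"
      using assms by (auto simp: a_def b_def)
    show "(\<Prod>s<2. mom (2*a s) v) + 1^2 * (\<Prod>s<2. mom (2*b s) v) - 2*1*(\<Prod>s<2. mom (a s + b s) v)
        = mom (2*(j+1)) v * mom (2*(n-(j+1))) v + mom (2*(j-1)) v * mom (2*(n-(j-1))) v
                    - 2 * (mom (2*j) v * mom (2*(n-j)) v)"
    proof -
      have h1: "n - (j - 1) = n - j + 1" "n - j - 1 = n - (j+1)" using assms by auto
      have "(\<Prod>s<2. mom (2*a s) v) = mom (2*(j+1)) v * mom (2*(n-(j+1))) v"
        using h1 by (simp add: numeral_2_eq_2 lessThan_Suc a_def del: One_nat_def)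
      moreover have "(\<Prod>s<2. mom (2*b s) v) = mom (2*(j-1)) v * mom (2*(n-(j-1))) v"
        using h1 by (simp add: numeral_2_eq_2 lessThan_Suc b_def del: One_nat_def)
      moreover have "(\<Prod>s<2. mom (a s + b s) v) = mom (2*j) v * mom (2*(n-j)) v"
      proof -
        have h2: "n - j - 1 + (n - j + 1) = n - j + (n - j)" "j + 1 + (j - 1) = j + j" using assms by auto
        show ?thesis using h2 by (simp add: numeral_2_eq_2 lessThan_Suc a_def b_def del: One_nat_def)
      qed
      ultimately show ?thesis by simp
    qed
  qed
qed

lemma even_step:
  assumes "1 \<le> a" "a \<le> b" "b + 1 \<le> t"
  shows "sos (a+b) (\<lambda>v. mom (2*(a-1)) v * mom (2*(b+1)) v - mom (2*a) v * mom (2*b) v)"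
proof -
  define n where "n = a + b"
  define F where "F = (\<lambda>j v. mom (2*j) v * mom (2*(n-j)) v)"
  define D where "D = (\<lambda>j v. F (j+1) v + F (j-1) v - 2 * F j v)"
  have tel: "(\<Sum>j\<in>{a..a+m}. D j v) = (F (a+m+1) v - F (a+m) v) - (F a v - F (a-1) v)" for m v
    by (induction m) (auto simp: D_def)
  have Ds: "sos n (D j)" if "j \<in> {a..a+(b-a)}" for j
  proof -
    have "sos n (\<lambda>v. mom (2*(j+1)) v * mom (2*(n-(j+1))) v + mom (2*(j-1)) v * mom (2*(n-(j-1))) v
                    - 2 * (mom (2*j) v * mom (2*(n-j)) v))"
      using that assms by (intro second_diff) (auto simp: n_def)
    then show ?thesis by (rule sos_cong) (simp add: D_def F_def)
  qed
  have "sos n (\<lambda>v. (1/2) * (\<Sum>j\<in>{a..a+(b-a)}. D j v))"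
    by (intro sos_scale sos_sum) (use Ds in auto)
  then show ?thesis unfolding n_def[symmetric]
  proof (rule sos_cong)
    fix v
    have f1: "F (a + (b-a) + 1) v = F (a-1) v" unfolding F_def n_def using assms
      by (simp add: mult.commute)
    have f2: "F (a + (b-a)) v = F a v" unfolding F_def n_def using assms
      by (simp add: mult.commute)
    show "1/2 * (\<Sum>j\<in>{a..a+(b-a)}. D j v) = mom (2*(a-1)) v * mom (2*(b+1)) v - mom (2*a) v * mom (2*b) v"
      unfolding tel f1 f2 using assms by (simp add: F_def n_def Suc_diff_le)
  qed
qed

end


lemma sum_two: "s0 < N \<Longrightarrow> s1 < N \<Longrightarrow> s0 \<noteq> s1 \<Longrightarrow>
   (\<Sum>s<N. f s) = f s0 + f s1 + (\<Sum>s\<in>{..<N}-{s0,s1}. f s)"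
  for f :: "nat \<Rightarrow> 'a::comm_monoid_add"
proof -
  assume a: "s0 < N" "s1 < N" "s0 \<noteq> s1"
  have "(\<Sum>s<N. f s) = f s0 + (\<Sum>s\<in>{..<N}-{s0}. f s)" using a by (intro sum.remove) auto
  also have "(\<Sum>s\<in>{..<N}-{s0}. f s) = f s1 + (\<Sum>s\<in>{..<N}-{s0}-{s1}. f s)" using a by (intro sum.remove) auto
  also have "{..<N}-{s0}-{s1} = {..<N}-{s0,s1}" by auto
  finally show ?thesis by (simp add: add.assoc)
qed

lemma prod_two: "s0 < N \<Longrightarrow> s1 < N \<Longrightarrow> s0 \<noteq> s1 \<Longrightarrow>
   (\<Prod>s<N. f s) = f s0 * f s1 * (\<Prod>s\<in>{..<N}-{s0,s1}. f s)"
  for f :: "nat \<Rightarrow> 'a::comm_monoid_mult"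
proof -
  assume a: "s0 < N" "s1 < N" "s0 \<noteq> s1"
  have "(\<Prod>s<N. f s) = f s0 * (\<Prod>s\<in>{..<N}-{s0}. f s)" using a by (intro prod.remove) auto
  also have "(\<Prod>s\<in>{..<N}-{s0}. f s) = f s1 * (\<Prod>s\<in>{..<N}-{s0}-{s1}. f s)" using a by (intro prod.remove) auto
  also have "{..<N}-{s0}-{s1} = {..<N}-{s0,s1}" by auto
  finally show ?thesis by (simp add: mult.assoc)
qed

context momset begin

lemma reduce:
  fixes N :: nat and k :: "nat \<Rightarrow> nat"
  shows "(\<Sum>s<N. k s) = t \<Longrightarrow> (\<forall>s<N. k s \<le> t-1) \<Longrightarrow>
         sos t (\<lambda>v. mom 2 v * mom (2*t-2) v - (\<Prod>s<N. mom (2 * k s) v))"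
proof (induction "t*t - (\<Sum>s<N. (k s)^2)" arbitrary: k rule: less_induct)
  case less
  note sumk = less.prems(1) and bnd = less.prems(2)
  have Npos: "N > 0" using sumk t2 by (cases N) auto
  define s0 where "s0 = (ARG_MAX k s. s < N)"
  have s0: "s0 < N" "\<forall>s<N. k s \<le> k s0"
    using arg_max_nat_lemma[of "\<lambda>s. s < N" 0 k "t+1"] Npos bnd unfolding s0_def by fastforce+
  have rest: "(\<Sum>s\<in>{..<N}-{s0}. k s) = t - k s0"
    using sum.remove[of "{..<N}" s0 k] s0 sumk by auto
  have "k s0 \<le> t - 1" using bnd s0 by auto
  then have "(\<Sum>s\<in>{..<N}-{s0}. k s) \<noteq> 0" using rest t2 by auto
  then obtain s1 where s1: "s1 \<in> {..<N}-{s0}" "k s1 \<noteq> 0"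
    by (meson sum.neutral)
  then have s1': "s1 < N" "s1 \<noteq> s0" "1 \<le> k s1" by auto
  define R where "R = {..<N}-{s0,s1}"
  have finR: "finite R" unfolding R_def by auto
  have sumR: "k s0 + k s1 + (\<Sum>s\<in>R. k s) = t"
    using sum_two[OF s0(1) s1'(1) s1'(2)[symmetric], of k] sumk unfolding R_def by simp
  have prodk: "(\<Prod>s<N. mom (2 * k s) v) = mom (2 * k s0) v * mom (2 * k s1) v * (\<Prod>s\<in>R. mom (2 * k s) v)" for v
    using prod_two[OF s0(1) s1'(1) s1'(2)[symmetric]] unfolding R_def by blast
  show ?case
  proof (cases "k s0 = t - 1")
    case True
    then have "k s1 + (\<Sum>s\<in>R. k s) = 1" using sumR t2 by auto
    then have k1: "k s1 = 1" and kR: "(\<Sum>s\<in>R. k s) = 0" using s1' by auto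
    have "\<forall>s\<in>R. k s = 0" using kR finR by simp
    then have "(\<Prod>s\<in>R. mom (2 * k s) v) = 1" for v by (simp add: mom0)
    then have "(\<Prod>s<N. mom (2 * k s) v) = mom 2 v * mom (2*t-2) v" for v
      unfolding prodk True k1 by (simp add: right_diff_distrib')
    then show ?thesis by (intro sos_cong[OF sos_zero]) simp
  next
    case False
    define a where "a = k s1"
    define b where "b = k s0"
    have ab: "1 \<le> a" "a \<le> b" "b + 1 \<le> t - 1"
      using s1' s0 False bnd unfolding a_def b_def by auto
    define k' where "k' = k(s1 := a - 1, s0 := b + 1)"
    have k'R: "\<forall>s\<in>R. k' s = k s" unfolding k'_def R_def by auto
    have k's: "k' s0 = b + 1" "k' s1 = a - 1" unfolding k'_def using s1' by auto
    have sum': "(\<Sum>s<N. k' s) = t"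
    proof -
      have "(\<Sum>s<N. k' s) = k' s0 + k' s1 + (\<Sum>s\<in>R. k' s)"
        using sum_two[OF s0(1) s1'(1) s1'(2)[symmetric], of k'] unfolding R_def by simp
      also have "(\<Sum>s\<in>R. k' s) = (\<Sum>s\<in>R. k s)" using k'R by simp
      finally show ?thesis using sumR k's ab unfolding a_def b_def by simp
    qed
    have bnd': "\<forall>s<N. k' s \<le> t - 1" using bnd ab unfolding k'_def by auto
    have sq: "(\<Sum>s<N. (k s)^2) < (\<Sum>s<N. (k' s)^2)"
    proof -
      have "(\<Sum>s<N. (k s)^2) = b^2 + a^2 + (\<Sum>s\<in>R. (k s)^2)"
        using sum_two[OF s0(1) s1'(1) s1'(2)[symmetric], of "\<lambda>s. (k s)^2"] unfolding R_def a_def b_def by simp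
      moreover have "(\<Sum>s<N. (k' s)^2) = (b+1)^2 + (a-1)^2 + (\<Sum>s\<in>R. (k s)^2)"
        using sum_two[OF s0(1) s1'(1) s1'(2)[symmetric], of "\<lambda>s. (k' s)^2"] k'R k's unfolding R_def by simp
      moreover have "b^2 + a^2 < (b+1)^2 + (a-1)^2" using ab
        by (cases a) (auto simp: power2_eq_square algebra_simps)
      ultimately show ?thesis by simp
    qed
    have sqle: "(\<Sum>s<N. (k' s)^2) \<le> t * t"
    proof -
      have "(\<Sum>s<N. (k' s)^2) \<le> (\<Sum>s<N. t * k' s)"
        using bnd' by (intro sum_mono) (auto simp: power2_eq_square)
      also have "\<dots> = t * t" using sum' by (simp add: sum_distrib_left[symmetric])
      finally show ?thesis .
    qed
    have IH: "sos t (\<lambda>v. mom 2 v * mom (2*t-2) v - (\<Prod>s<N. mom (2 * k' s) v))"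
      using less.hyps[of k'] sq sqle sum' bnd' by auto
    have prodk': "(\<Prod>s<N. mom (2 * k' s) v) = mom (2 * (b+1)) v * mom (2 * (a-1)) v * (\<Prod>s\<in>R. mom (2 * k s) v)" for v
      using prod_two[OF s0(1) s1'(1) s1'(2)[symmetric], of "\<lambda>s. mom (2 * k' s) v"] k'R k's unfolding R_def by simp
    have PR: "sos (\<Sum>s\<in>R. k s) (\<lambda>v. \<Prod>s\<in>R. mom (2 * k s) v)"
      using finR bnd unfolding R_def by (intro sos_prod) (auto intro!: mom_sos)
    have ES: "sos (a+b) (\<lambda>v. mom (2*(a-1)) v * mom (2*(b+1)) v - mom (2*a) v * mom (2*b) v)"
      using ab by (intro even_step) auto
    have "sos ((\<Sum>s\<in>R. k s) + (a+b)) (\<lambda>v. (\<Prod>s\<in>R. mom (2 * k s) v) *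
              (mom (2*(a-1)) v * mom (2*(b+1)) v - mom (2*a) v * mom (2*b) v))"
      by (rule sos_mult[OF PR ES])
    moreover have "(\<Sum>s\<in>R. k s) + (a+b) = t" using sumR unfolding a_def b_def by simp
    ultimately have S2: "sos t (\<lambda>v. (\<Prod>s\<in>R. mom (2 * k s) v) *
              (mom (2*(a-1)) v * mom (2*(b+1)) v - mom (2*a) v * mom (2*b) v))" by simp
    show ?thesis
    proof (rule sos_cong[OF sos_add[OF IH S2]])
      fix v
      show "mom 2 v * mom (2 * t - 2) v - (\<Prod>s<N. mom (2 * k' s) v) + (\<Prod>s\<in>R. mom (2 * k s) v) *
              (mom (2 * (a - 1)) v * mom (2 * (b + 1)) v - mom (2 * a) v * mom (2 * b) v)
          = mom 2 v * mom (2 * t - 2) v - (\<Prod>s<N. mom (2 * k s) v)"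
        unfolding prodk' prodk a_def b_def by (simp add: algebra_simps)
    qed
  qed
qed

end


lemma prod_list_map_nth: "prod_list (map f xs) = (\<Prod>s<length xs. f (xs ! s))"
  for f :: "'a \<Rightarrow> 'b::comm_monoid_mult"
  by (induction xs) (simp_all add: prod.lessThan_Suc_shift del: prod.lessThan_Suc)

lemma sum_list_nth: "sum_list xs = (\<Sum>s<length xs. xs ! s)"
  for xs :: "'a::comm_monoid_add list"
  by (induction xs) (simp_all add: sum.lessThan_Suc_shift del: sum.lessThan_Suc)

lemma sum_indic: "finite A \<Longrightarrow> (\<Sum>s\<in>A. if P s then 1 else 0) = card {s\<in>A. P s}"
  by (simp add: sum.inter_filter[symmetric])

context momset begin

lemma main_sos:
  fixes ids :: "nat list"
  assumes si: "sum_list ids = 2*t" and bi: "\<forall>i\<in>set ids. i \<le> 2*t-2"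
  shows "sos t (\<lambda>v. mom 2 v * mom (2*t-2) v - (\<Prod>s<length ids. mom (ids!s) v))"
proof -
  define N where "N = length ids"
  define i where "i = (\<lambda>s. ids ! s)"
  have sumi: "(\<Sum>s<N. i s) = 2*t" using si unfolding N_def i_def sum_list_nth by simp
  have bnd: "\<forall>s<N. i s \<le> 2*t-2" using bi unfolding N_def i_def by auto
  define Od where "Od = {s\<in>{..<N}. odd (i s)}"
  have "(\<Sum>s<N. i s) = (\<Sum>s<N. 2 * (i s div 2) + (if odd (i s) then 1 else 0))"
    by (intro sum.cong) auto
  also have "\<dots> = 2 * (\<Sum>s<N. i s div 2) + card Od"
    unfolding Od_def by (simp add: sum.distrib sum_distrib_left sum_indic)
  finally have cO: "2 * (\<Sum>s<N. i s div 2) + card Od = 2*t" using sumi by simp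
  obtain T where T: "T \<subseteq> Od" "card T = card Od div 2" "finite T"
    using obtain_subset_with_card_n[of "card Od div 2" Od] by auto
  define a where "a = (\<lambda>s. i s div 2 + (if s \<in> T then 1 else 0))"
  define b where "b = (\<lambda>s. i s - a s)"
  have Todd: "s \<in> T \<Longrightarrow> odd (i s) \<and> s < N" for s using T(1) unfolding Od_def by auto
  have ai: "a s \<le> i s" for s
    unfolding a_def using Todd[of s] by (cases "s \<in> T") (auto elim!: oddE)
  have abi: "a s + b s = i s" for s unfolding b_def using ai[of s] by simp
  have suma: "(\<Sum>s<N. a s) = t"
  proof -
    have "(\<Sum>s<N. a s) = (\<Sum>s<N. i s div 2) + card {s\<in>{..<N}. s \<in> T}"
      unfolding a_def by (simp add: sum.distrib sum_indic)
    also have "{s\<in>{..<N}. s \<in> T} = T" using Todd by auto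
    finally show ?thesis using cO T(2) by simp
  qed
  have sumb: "(\<Sum>s<N. b s) = t"
  proof -
    have "(\<Sum>s<N. b s) = (\<Sum>s<N. i s) - (\<Sum>s<N. a s)"
      unfolding b_def using ai by (simp add: sum_subtractf_nat)
    then show ?thesis using sumi suma by simp
  qed
  have bab: "\<forall>s<N. a s \<le> t - 1 \<and> b s \<le> t - 1"
  proof (intro allI impI)
    fix s assume s: "s < N"
    have iss: "i s \<le> 2*t-2" using bnd s by auto
    show "a s \<le> t - 1 \<and> b s \<le> t - 1"
    proof (cases "odd (i s)")
      case True
      then obtain m where m: "i s = 2*m+1" by (auto elim: oddE)
      then have "m + 1 \<le> t - 1" using iss by auto
      then show ?thesis unfolding b_def a_def using m by auto
    next
      case False
      then obtain m where m: "i s = 2*m" by (auto elim: evenE)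
      then have "s \<notin> T" using Todd by (metis even_mult_iff even_numeral)
      then show ?thesis unfolding b_def a_def using m iss by auto
    qed
  qed
  have M: "sos t (\<lambda>v. (\<Prod>s<N. mom (2*a s) v) + 1^2 * (\<Prod>s<N. mom (2*b s) v)
                    - 2*1*(\<Prod>s<N. mom (a s + b s) v))"
    using bab suma sumb by (intro master) auto
  have Ea: "sos t (\<lambda>v. mom 2 v * mom (2*t-2) v - (\<Prod>s<N. mom (2 * a s) v))"
    using bab suma by (intro reduce) auto
  have Eb: "sos t (\<lambda>v. mom 2 v * mom (2*t-2) v - (\<Prod>s<N. mom (2 * b s) v))"
    using bab sumb by (intro reduce) auto
  have "sos t (\<lambda>v. (1/2) * (mom 2 v * mom (2*t-2) v - (\<Prod>s<N. mom (2 * a s) v))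
           + (1/2) * (mom 2 v * mom (2*t-2) v - (\<Prod>s<N. mom (2 * b s) v))
           + (1/2) * ((\<Prod>s<N. mom (2*a s) v) + 1^2 * (\<Prod>s<N. mom (2*b s) v)
                    - 2*1*(\<Prod>s<N. mom (a s + b s) v)))"
    by (intro sos_add sos_scale Ea Eb M) auto
  note S = this
  have C: "(\<Prod>s<N. mom (a s + b s) v) = (\<Prod>s<length ids. mom (ids!s) v)" for v
    by (simp add: abi N_def i_def)
  show ?thesis
    by (rule sos_cong[OF S]) (simp only: C, simp add: algebra_simps)
qed

end



theorem lemma4p6:
  fixes p :: "(real^'d) measure" and t :: nat and ids :: "nat list"
  assumes "t \<ge> 2"
    and "prob_space p" and "sets p = sets borel"
    and "integrable p (\<lambda>x. (norm x) ^ (2*t))"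
    and "sum_list ids = 2*t"
    and "\<forall>i\<in>set ids. i \<le> 2*t - 2"
  shows "sos_le_2t t
           (tensor_poly (2*t) (tensor_prod_list (map (\<lambda>i. (i, moment_tensor p i)) ids)))
           (tensor_poly (2*t) (tensor_prod_list [(2, moment_tensor p 2), (2*t - 2, moment_tensor p (2*t - 2))]))"
proof -
  interpret momset p t using assms(1-4) unfolding momset_def by blast
  have L: "tensor_poly (2*t) (tensor_prod_list (map (\<lambda>i. (i, moment_tensor p i)) ids)) v
      = (\<Prod>s<length ids. mom (ids!s) v)" for v
  proof -
    have "sum_list (map fst (map (\<lambda>i. (i, moment_tensor p i)) ids)) = 2*t"
      using assms(5) by (simp add: comp_def)
    then show ?thesis
      using tensor_prod_list_poly[of "map (\<lambda>i. (i, moment_tensor p i)) ids" v]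
      by (simp add: comp_def prod_list_map_nth mom_def)
  qed
  have R: "tensor_poly (2*t) (tensor_prod_list [(2, moment_tensor p 2), (2*t - 2, moment_tensor p (2*t - 2))]) v
      = mom 2 v * mom (2*t-2) v" for v
  proof -
    have "sum_list (map fst [(2, moment_tensor p 2), (2*t - 2, moment_tensor p (2*t - 2))]) = 2*t"
      using assms(1) by simp
    then show ?thesis
      using tensor_prod_list_poly[of "[(2, moment_tensor p 2), (2*t - 2, moment_tensor p (2*t - 2))]" v]
      by (simp add: mom_def)
  qed
  obtain qs where qs: "\<forall>q\<in>set qs. poly_deg_le t q"
    "\<forall>v. mom 2 v * mom (2*t-2) v - (\<Prod>s<length ids. mom (ids!s) v) = (\<Sum>q\<leftarrow>qs. (q v)^2)"
    using main_sos[OF assms(5,6)] unfolding sos_def by blast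
  show ?thesis unfolding sos_le_2t_def
  proof (intro exI conjI)
    show "poly_deg_le (2*t-2) (\<lambda>v::real^'d. 0)" by (rule pdl_const)
    show "\<forall>q\<in>set qs. poly_deg_le t q" by (rule qs(1))
    show "\<forall>v. tensor_poly (2*t) (tensor_prod_list [(2, moment_tensor p 2), (2*t - 2, moment_tensor p (2*t - 2))]) v
        - tensor_poly (2*t) (tensor_prod_list (map (\<lambda>i. (i, moment_tensor p i)) ids)) v
        - 0 * ((norm v)^2 - 1) = (\<Sum>q\<leftarrow>qs. (q v)^2)"
      using qs(2) unfolding L R by simp
  qed
qed


end
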